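(* Let $n\geq 3$ and let $W_n=K_1\vee C_n$ be the wheel of order $n+1$. Then $\gamma_{sR}(W_4)=2$, and $\gamma_{sR}(W_n)=1$ for every $n\neq 4$.
   Context: $C_n$ denotes the cycle on $n$ vertices and $K_1$ the one-vertex graph. The join $G_1\vee G_2$ of two graphs has vertex set $V(G_1)\cup V(G_2)$ (disjoint union) and edge set $E(G_1)\cup E(G_2)\cup\{uv: u\in V(G_1), v\in V(G_2)\}$. For a graph $G=(V,E)$ and $x\in V$, $N_G[x]=\{x\}\cup\{y: xy\in E\}$. A signed Roman dominating function (SRDF) on $G$ is a function $f:V\to\{-1,1,2\}$ such that (a) $\sum_{y\in N_G[x]}f(y)\geq 1$ for every $x\in V$, and (b) every vertex $x$ with $f(x)=-1$ is adjacent to at least one vertex $y$ with $f(y)=2$. The weight of $f$ is $\sum_{x\in V}f(x)$, and $\gamma_{sR}(G)$ is the minimum weight of an SRDF on $G$. *)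

theory Defs
  imports Main
begin

text \<open>Simple graphs given by a finite vertex set V and symmetric irreflexive adjacency E.\<close>

definition closed_nbhd :: "'a set \<Rightarrow> ('a \<Rightarrow> 'a \<Rightarrow> bool) \<Rightarrow> 'a \<Rightarrow> 'a set" where
  "closed_nbhd V E x = {x} \<union> {y \<in> V. E x y}"

definition is_SRDF :: "'a set \<Rightarrow> ('a \<Rightarrow> 'a \<Rightarrow> bool) \<Rightarrow> ('a \<Rightarrow> int) \<Rightarrow> bool" where
  "is_SRDF V E f \<longleftrightarrow>
     (\<forall>x\<in>V. f x \<in> {-1, 1, 2}) \<and>
     (\<forall>x\<in>V. (\<Sum>y\<in>closed_nbhd V E x. f y) \<ge> 1) \<and>
     (\<forall>x\<in>V. f x = -1 \<longrightarrow> (\<exists>y\<in>V. E x y \<and> f y = 2))"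

definition weight :: "'a set \<Rightarrow> ('a \<Rightarrow> int) \<Rightarrow> int" where
  "weight V f = (\<Sum>x\<in>V. f x)"

text \<open>Signed Roman domination number: minimum weight of an SRDF
  (the set of weights is finite and, for nonempty finite V, nonempty).\<close>
definition gamma_sR :: "'a set \<Rightarrow> ('a \<Rightarrow> 'a \<Rightarrow> bool) \<Rightarrow> int" where
  "gamma_sR V E = Min {weight V f | f. is_SRDF V E f}"

text \<open>Wheel W_n = K_1 join C_n: vertices 0..n-1 form the cycle
  (i adjacent to (i+1) mod n), vertex n is the hub.\<close>
definition wheel_V :: "nat \<Rightarrow> nat set" where
  "wheel_V n = {0..n}"

definition cycle_adj :: "nat \<Rightarrow> nat \<Rightarrow> nat \<Rightarrow> bool" where
  "cycle_adj n i j \<longleftrightarrow> i < n \<and> j < n \<and> (j = (i + 1) mod n \<or> i = (j + 1) mod n)"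

definition wheel_E :: "nat \<Rightarrow> nat \<Rightarrow> nat \<Rightarrow> bool" where
  "wheel_E n i j \<longleftrightarrow> cycle_adj n i j \<or> (i = n \<and> j < n) \<or> (j = n \<and> i < n)"

end

theory Submission
  imports Defs
begin

definition gg :: "nat \<Rightarrow> int" where "gg x = (if even x then -1 else 1)"
definition hh :: "nat \<Rightarrow> int" where
  "hh x = (if x = 1 \<or> x = 3 then -1 else if x = 2 then 2 else gg x)"
definition fw :: "nat \<Rightarrow> nat \<Rightarrow> int" where
  "fw n x = (if x = n then 2 else if even n \<and> n \<noteq> 4 then hh x else gg x)"

definition prv :: "nat \<Rightarrow> nat \<Rightarrow> nat" where "prv n i = (if i = 0 then n - 1 else i - 1)"
definition nxt :: "nat \<Rightarrow> nat \<Rightarrow> nat" where "nxt n i = (if i = n - 1 then 0 else i + 1)"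

lemma sum_gg_even: "(\<Sum>x<2*k. gg x) = 0"
  by (induction k) (auto simp: gg_def)

lemma sum_gg_odd: "(\<Sum>x<2*k+1. gg x) = -1"
  using sum_gg_even[of k] by (simp add: gg_def)

lemma sum_hh: "(\<Sum>x<2*k+6. hh x) = -1"
proof (induction k)
  case 0
  have "{..<6::nat} = {0,1,2,3,4,5}" by auto
  then show ?case by (simp add: hh_def gg_def)
next
  case (Suc k)
  have "2 * Suc k + 6 = Suc (Suc (2*k+6))" by simp
  then have A: "(\<Sum>x<2*Suc k+6. hh x) = (\<Sum>x<2*k+6. hh x) + hh (2*k+6) + hh (2*k+7)"
    by (simp only: \<open>2 * Suc k + 6 = Suc (Suc (2*k+6))\<close> sum.lessThan_Suc)
       (simp add: add.assoc add.commute)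
  have B: "hh (2*k+6) + hh (2*k+7) = 0" by (simp add: hh_def gg_def)
  show ?case using A B Suc by simp
qed

lemma nbhd_hub: "closed_nbhd (wheel_V n) (wheel_E n) n = wheel_V n"
  by (auto simp: closed_nbhd_def wheel_V_def wheel_E_def cycle_adj_def)

lemma nbhd_cyc:
  assumes "n \<ge> 3" "i < n"
  shows "closed_nbhd (wheel_V n) (wheel_E n) i = {i, prv n i, nxt n i, n}"
proof -
  have "wheel_E n i y \<longleftrightarrow> y = prv n i \<or> y = nxt n i \<or> y = n" if "y \<le> n" for y
  proof -
    have "cycle_adj n i y \<longleftrightarrow> y = prv n i \<or> y = nxt n i" if "y < n"
      using assms that unfolding cycle_adj_def prv_def nxt_def
      by (cases "i = 0"; cases "i = n - 1"; cases "y = 0"; cases "y = n - 1")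
         (auto simp: mod_if)
    moreover have "\<not> cycle_adj n i n" by (simp add: cycle_adj_def)
    moreover have "prv n i < n" "nxt n i < n" using assms by (auto simp: prv_def nxt_def)
    ultimately show ?thesis using assms that unfolding wheel_E_def
      by (cases "y = n") auto
  qed
  moreover have "prv n i \<le> n" "nxt n i \<le> n" using assms by (auto simp: prv_def nxt_def)
  ultimately show ?thesis using assms
    unfolding closed_nbhd_def wheel_V_def by auto
qed

lemma nbhd_sum:
  assumes "n \<ge> 3" "i < n"
  shows "(\<Sum>y\<in>closed_nbhd (wheel_V n) (wheel_E n) i. f y) = f i + f (prv n i) + f (nxt n i) + f n"
proof -
  have d: "i \<noteq> prv n i" "i \<noteq> nxt n i" "prv n i \<noteq> nxt n i" "prv n i \<noteq> n" "nxt n i \<noteq> n"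
    using assms by (auto simp: prv_def nxt_def)
  show ?thesis using d assms by (simp add: nbhd_cyc add.assoc)
qed

lemma weight_ge1:
  assumes "is_SRDF (wheel_V n) (wheel_E n) f"
  shows "weight (wheel_V n) f \<ge> 1"
proof -
  have "n \<in> wheel_V n" by (simp add: wheel_V_def)
  then show ?thesis using assms nbhd_hub[of n] unfolding is_SRDF_def weight_def by force
qed

lemma four_ge2:
  assumes "is_SRDF (wheel_V 4) (wheel_E 4) f"
  shows "weight (wheel_V 4) f \<ge> 2"
proof -
  have W: "weight (wheel_V 4) f = f 0 + f 1 + f 2 + f 3 + f 4"
    by (simp add: weight_def wheel_V_def numeral_eq_Suc atLeast0_atMost_Suc)
  have c: "\<And>x. x \<le> 4 \<Longrightarrow> (\<Sum>y\<in>closed_nbhd (wheel_V 4) (wheel_E 4) x. f y) \<ge> 1"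
    and v: "\<And>x. x \<le> 4 \<Longrightarrow> f x \<in> {-1,1,2}"
    using assms unfolding is_SRDF_def wheel_V_def by auto
  have "f 0 + f 3 + f 1 + f 4 \<ge> 1" using c[of 0] nbhd_sum[of 4 0 f] by (simp add: prv_def nxt_def eval_nat_numeral)
  moreover have "f 1 + f 0 + f 2 + f 4 \<ge> 1" using c[of 1] nbhd_sum[of 4 1 f] by (simp add: prv_def nxt_def eval_nat_numeral)
  moreover have "f 2 + f 1 + f 3 + f 4 \<ge> 1" using c[of 2] nbhd_sum[of 4 2 f] by (simp add: prv_def nxt_def eval_nat_numeral)
  moreover have "f 3 + f 2 + f 0 + f 4 \<ge> 1" using c[of 3] nbhd_sum[of 4 3 f] by (simp add: prv_def nxt_def eval_nat_numeral)
  moreover have "weight (wheel_V 4) f \<ge> 1" using weight_ge1 assms by blast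
  moreover have "f 4 \<in> {-1,1,2}" "f 0 \<in> {-1,1,2}" "f 1 \<in> {-1,1,2}" "f 2 \<in> {-1,1,2}" "f 3 \<in> {-1,1,2}"
    using v by auto
  ultimately show ?thesis unfolding W by auto
qed

lemma gg_tri:
  assumes "n \<ge> 3" "i < n"
  shows "gg i + gg (prv n i) + gg (nxt n i) \<ge> -1"
proof -
  consider "i = 0" | "i = n - 1" | "0 < i \<and> i < n - 1" using assms by linarith
  then show ?thesis
  proof cases
    case 1 then show ?thesis using assms by (simp add: gg_def prv_def nxt_def)
  next
    case 2 then show ?thesis using assms by (auto simp: gg_def prv_def nxt_def)
  next
    case 3 then show ?thesis using assms by (auto simp: gg_def prv_def nxt_def)
  qed
qed

lemma hh_tri:
  assumes "n \<ge> 6" "even n" "i < n"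
  shows "hh i + hh (prv n i) + hh (nxt n i) \<ge> -1"
proof -
  consider "i = 0" | "i = n - 1" | "0 < i \<and> i < n - 1" using assms by linarith
  then show ?thesis
  proof cases
    case 1 then show ?thesis using assms by (auto simp: hh_def gg_def prv_def nxt_def)
  next
    case 2 then show ?thesis using assms by (auto simp: hh_def gg_def prv_def nxt_def)
  next
    case 3 then show ?thesis using assms by (auto simp: hh_def gg_def prv_def nxt_def)
  qed
qed

lemma fw_weight:
  assumes "n \<ge> 3"
  shows "weight (wheel_V n) (fw n) = (if n = 4 then 2 else 1)"
proof -
  have V: "wheel_V n = insert n {..<n}" by (auto simp: wheel_V_def)
  have W: "weight (wheel_V n) (fw n) = 2 + (\<Sum>x<n. fw n x)"
    unfolding weight_def V by (simp add: fw_def)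
  show ?thesis
  proof (cases "even n")
    case True
    then obtain k where k: "n = 2*k" by blast
    show ?thesis
    proof (cases "n = 4")
      case True
      have "(\<Sum>x<n. fw n x) = (\<Sum>x<n. gg x)" using True by (simp add: fw_def)
      then show ?thesis using True W sum_gg_even[of 2] by simp
    next
      case False
      with k assms have "k \<ge> 3" by auto
      then obtain j where "k = j + 3" using le_Suc_ex[of 3 k] by (auto simp: add.commute)
      then have j: "n = 2*j+6" using k by simp
      have "(\<Sum>x<n. fw n x) = (\<Sum>x<n. hh x)" using False True by (simp add: fw_def)
      then show ?thesis using False W sum_hh[of j] j by simp
    qed
  next
    case False
    then obtain k where k: "n = 2*k+1" using oddE by blast
    have "(\<Sum>x<n. fw n x) = (\<Sum>x<n. gg x)" using False by (simp add: fw_def)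
    moreover have "n \<noteq> 4" using False by auto
    ultimately show ?thesis using W sum_gg_odd[of k] k by simp
  qed
qed

lemma fw_SRDF:
  assumes "n \<ge> 3"
  shows "is_SRDF (wheel_V n) (wheel_E n) (fw n)"
  unfolding is_SRDF_def
proof (intro conjI ballI impI)
  fix x assume "x \<in> wheel_V n"
  show "fw n x \<in> {-1,1,2}" by (simp add: fw_def hh_def gg_def)
next
  fix x assume x: "x \<in> wheel_V n"
  show "(\<Sum>y\<in>closed_nbhd (wheel_V n) (wheel_E n) x. fw n y) \<ge> 1"
  proof (cases "x = n")
    case True
    then show ?thesis using nbhd_hub[of n] fw_weight[OF assms] unfolding weight_def
      by (simp split: if_splits)
  next
    case False
    then have xn: "x < n" using x by (auto simp: wheel_V_def)
    have pn: "prv n x \<noteq> n" "nxt n x \<noteq> n" using assms xn by (auto simp: prv_def nxt_def)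
    have "fw n x + fw n (prv n x) + fw n (nxt n x) \<ge> -1"
    proof (cases "even n \<and> n \<noteq> 4")
      case True
      then have "n \<ge> 6" using assms by presburger
      then show ?thesis using hh_tri[of n x] True xn pn False by (simp add: fw_def)
    next
      case c: False
      then show ?thesis using c gg_tri[of n x] assms xn pn False by (auto simp: fw_def)
    qed
    then show ?thesis using nbhd_sum[OF assms xn, of "fw n"] by (simp add: fw_def)
  qed
next
  fix x assume x: "x \<in> wheel_V n" and m: "fw n x = -1"
  then have "x \<noteq> n" by (auto simp: fw_def)
  then have "x < n" using x by (auto simp: wheel_V_def)
  then show "\<exists>y\<in>wheel_V n. wheel_E n x y \<and> fw n y = 2"
    by (intro bexI[of _ n]) (auto simp: wheel_E_def fw_def wheel_V_def)
qed

lemma weights_finite: "finite {weight V f | f. is_SRDF V E f}" if "finite V"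
proof -
  have "{weight V f | f. is_SRDF V E f} \<subseteq> {- int (card V) .. 2 * int (card V)}"
  proof
    fix w assume "w \<in> {weight V f | f. is_SRDF V E f}"
    then obtain f where w: "w = weight V f" and f: "is_SRDF V E f" by blast
    have v: "\<forall>x\<in>V. f x \<in> {-1,1,2}" using f by (simp add: is_SRDF_def)
    have "(\<Sum>x\<in>V. f x) \<le> (\<Sum>x\<in>V. 2)" using v by (intro sum_mono) auto
    moreover have "(\<Sum>x\<in>V. -1) \<le> (\<Sum>x\<in>V. f x)" using v by (intro sum_mono) auto
    ultimately show "w \<in> {- int (card V) .. 2 * int (card V)}" by (simp add: w weight_def)
  qed
  then show ?thesis using finite_subset by blast
qed

theorem mainTheorem12:
  fixes n :: nat
  assumes "n \<ge> 3"
  shows "gamma_sR (wheel_V n) (wheel_E n) = (if n = 4 then 2 else 1)"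
  unfolding gamma_sR_def
proof (rule Min_eqI)
  show "finite {weight (wheel_V n) f | f. is_SRDF (wheel_V n) (wheel_E n) f}"
    by (rule weights_finite) (simp add: wheel_V_def)
next
  show "(if n = 4 then 2 else 1) \<in> {weight (wheel_V n) f | f. is_SRDF (wheel_V n) (wheel_E n) f}"
    using fw_SRDF[OF assms] fw_weight[OF assms] by (metis (mono_tags, lifting) mem_Collect_eq)
next
  fix y assume "y \<in> {weight (wheel_V n) f | f. is_SRDF (wheel_V n) (wheel_E n) f}"
  then obtain f where y: "y = weight (wheel_V n) f" and f: "is_SRDF (wheel_V n) (wheel_E n) f" by blast
  show "(if n = 4 then 2 else 1) \<le> y"
    using weight_ge1[OF f] four_ge2[of f] f y by auto
qed

end
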